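(* Let $A\in\mathbb{C}^{n\times n}$, $C\in\mathbb{C}^{1\times n}$, $s=\{s_1,\dots,s_j\}\subset\mathbb{C}\setminus\Lambda(A^* )$, and let $\mathcal{K}_j(A^*,C^*,s)$ be $A^*$-variant with basis $Z_j$ such that $A^*Z_j=C^*h_j+Z_jH_{-j}$ with $h_j\in\mathbb{C}^{1\times j}$, $H_{-j}\in\mathbb{C}^{j\times j}$ and $\Lambda(H_{-j})=s$. Then the pair $(h_j,H_{-j})$ is observable, i.e. there is no nonzero $u\in\mathbb{C}^j$ with $h_ju=0$ and $H_{-j}u=\mu u$ for some $\mu\in\mathbb{C}$. Consequently, for every $B\in\mathbb{C}^{n\times m}$ the pair $\big(H_{-j}^*,\begin{bmatrix}h_j^*&Z_j^*B\end{bmatrix}\big)$ is controllable.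
   Context: For $M\in\mathbb{C}^{n\times n}$, $b\in\mathbb{C}^n$ and a multiset $s=\{s_1,\dots,s_j\}\subset(\mathbb{C}\cup\{\infty\})\setminus\Lambda(M)$, with $q(x)=\prod_{i:\,s_i\ne\infty}(x-s_i)$, the rational Krylov subspace is $\mathcal{K}_j(M,b,s)=\{q(M)^{-1}p(M)b:p\in\Pi_{j-1}\}$. A subspace $\mathcal{V}$ is $M$-variant if $M\mathcal{V}\not\subseteq\mathcal{V}$. The matrix $\begin{bmatrix}C^*&Z_j\end{bmatrix}$ has full column rank. A pair $(F,G)$ with $F\in\mathbb{C}^{j\times j}$ is controllable if $\operatorname{rank}\begin{bmatrix}G&FG&\cdots&F^{j-1}G\end{bmatrix}=j$. *)

theory Defs
  imports "Jordan_Normal_Form.DL_Rank" "Jordan_Normal_Form.Schur_Decomposition"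
    "Jordan_Normal_Form.Char_Poly" "HOL-Library.Multiset"
begin

definition poly_mat :: "'a :: comm_ring_1 poly \<Rightarrow> 'a mat \<Rightarrow> 'a mat" where
  "poly_mat p M = foldr (\<lambda>c N. c \<cdot>\<^sub>m 1\<^sub>m (dim_row M) + M * N) (coeffs p) (0\<^sub>m (dim_row M) (dim_row M))"

text \<open>Inverse of a square matrix (meaningful when it is invertible).\<close>
definition inv_mat :: "'a :: comm_ring_1 mat \<Rightarrow> 'a mat" where
  "inv_mat M = (SOME N. N \<in> carrier_mat (dim_row M) (dim_row M) \<and>
                        M * N = 1\<^sub>m (dim_row M) \<and> N * M = 1\<^sub>m (dim_row M))"

definition nodal_poly :: "'a :: comm_ring_1 multiset \<Rightarrow> 'a poly" where
  "nodal_poly s = (\<Prod>x\<in>#s. [:-x, 1:])"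

text \<open>Rational Krylov subspace K_j(M,b,s) = { q(M)^{-1} p(M) b : p in Pi_{j-1} },
  j = size s, all poles finite.  Pi_{j-1} = polynomials of degree at most j-1
  (for j = 0 this is just the zero polynomial).\<close>
definition rat_krylov :: "'a :: field mat \<Rightarrow> 'a vec \<Rightarrow> 'a multiset \<Rightarrow> 'a vec set" where
  "rat_krylov M b s = {inv_mat (poly_mat (nodal_poly s) M) *\<^sub>v (poly_mat p M *\<^sub>v b) | p.
                        p = 0 \<or> degree p < size s}"

definition variant :: "'a :: semiring_1 mat \<Rightarrow> 'a vec set \<Rightarrow> bool" where
  "variant M V \<longleftrightarrow> \<not> ((\<lambda>v. M *\<^sub>v v) ` V \<subseteq> V)"

definition hcat :: "'a :: zero mat \<Rightarrow> 'a mat \<Rightarrow> 'a mat" where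
  "hcat X Y = mat (dim_row X) (dim_col X + dim_col Y)
     (\<lambda>(i, k). if k < dim_col X then X $$ (i, k) else Y $$ (i, k - dim_col X))"

text \<open>Controllability matrix [G, F G, ..., F^(j-1) G] for F of size j x j.\<close>
definition ctrb_mat :: "'a :: semiring_1 mat \<Rightarrow> 'a mat \<Rightarrow> 'a mat" where
  "ctrb_mat F G = mat (dim_row F) (dim_row F * dim_col G)
     (\<lambda>(i, k). ((F ^\<^sub>m (k div dim_col G)) * G) $$ (i, k mod dim_col G))"

definition controllable :: "'a :: field mat \<Rightarrow> 'a mat \<Rightarrow> bool" where
  "controllable F G \<longleftrightarrow> vec_space.rank (dim_row F) (ctrb_mat F G) = dim_row F"

end

theory Submission imports Defs begin

fun pvl :: "complex mat \<Rightarrow> complex list \<Rightarrow> complex vec \<Rightarrow> complex vec" where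
  "pvl H [] u = 0\<^sub>v (dim_vec u)"
| "pvl H (a # cs) u = a \<cdot>\<^sub>v u + pvl H cs (H *\<^sub>v u)"

definition pv :: "complex mat \<Rightarrow> complex poly \<Rightarrow> complex vec \<Rightarrow> complex vec" where
  "pv H p u = pvl H (coeffs p) u"

lemma pvl_carrier: "H \<in> carrier_mat j j \<Longrightarrow> u \<in> carrier_vec j \<Longrightarrow> pvl H cs u \<in> carrier_vec j"
  by (induct cs arbitrary: u) auto

lemma pv_carrier: "H \<in> carrier_mat j j \<Longrightarrow> u \<in> carrier_vec j \<Longrightarrow> pv H p u \<in> carrier_vec j"
  unfolding pv_def by (rule pvl_carrier)

lemma pv_0: "u \<in> carrier_vec j \<Longrightarrow> pv H 0 u = 0\<^sub>v j"
  by (simp add: pv_def)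

lemma pv_pCons: assumes H: "H \<in> carrier_mat j j" and u: "u \<in> carrier_vec j"
  shows "pv H (pCons a p) u = a \<cdot>\<^sub>v u + pv H p (H *\<^sub>v u)"
proof (cases "p = 0 \<and> a = 0")
  case True
  then show ?thesis using H u by (auto simp: pv_def intro!: eq_vecI)
next
  case False
  then have "coeffs (pCons a p) = a # coeffs p" by (auto simp: cCons_def)
  then show ?thesis by (simp add: pv_def)
qed

lemma pv_add: assumes H: "H \<in> carrier_mat j j"
  shows "u \<in> carrier_vec j \<Longrightarrow> pv H (p + q) u = pv H p u + pv H q u"
proof (induction p arbitrary: q u rule: pCons_induct)
  case 0
  then show ?case using pv_carrier[OF H, of u q] by (simp add: pv_0)
next
  case (pCons a p)
  obtain b q' where q: "q = pCons b q'" by (cases q)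
  have Hu: "H *\<^sub>v u \<in> carrier_vec j" using H pCons by auto
  have "pv H (pCons a p + q) u = pv H (pCons (a+b) (p + q')) u" using q by simp
  also have "\<dots> = (a+b) \<cdot>\<^sub>v u + (pv H p (H *\<^sub>v u) + pv H q' (H *\<^sub>v u))"
    using pv_pCons[OF H pCons.prems] pCons.IH[OF Hu] by simp
  also have "\<dots> = pv H (pCons a p) u + pv H q u"
    unfolding q pv_pCons[OF H pCons.prems]
    using pv_carrier[OF H Hu, of p] pv_carrier[OF H Hu, of q'] pCons.prems
    by (intro eq_vecI) (auto simp: algebra_simps)
  finally show ?case by (simp add: q)
qed

lemma pv_smult: assumes H: "H \<in> carrier_mat j j"
  shows "u \<in> carrier_vec j \<Longrightarrow> pv H (smult c p) u = c \<cdot>\<^sub>v pv H p u"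
proof (induction p arbitrary: u rule: pCons_induct)
  case 0
  then show ?case by (auto simp: pv_0 intro!: eq_vecI)
next
  case (pCons a p)
  have Hu: "H *\<^sub>v u \<in> carrier_vec j" using H pCons by auto
  show ?case
    unfolding smult_pCons pv_pCons[OF H pCons.prems] pCons.IH[OF Hu]
    using pv_carrier[OF H Hu, of p] pCons.prems
    by (intro eq_vecI) (auto simp: algebra_simps)
qed

lemma pow_mat_commute: "A \<in> carrier_mat n n \<Longrightarrow> A * A ^\<^sub>m k = A ^\<^sub>m k * A"
proof (induction k)
  case 0
  then show ?case by simp
next
  case (Suc k)
  have "A * A ^\<^sub>m Suc k = (A * A ^\<^sub>m k) * A" using Suc(2) by (simp add: assoc_mult_mat[of _ n n _ n _ n])
  also have "\<dots> = A ^\<^sub>m Suc k * A" using Suc by simp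
  finally show ?case .
qed

lemma pv_comm: assumes H: "H \<in> carrier_mat j j"
  shows "u \<in> carrier_vec j \<Longrightarrow> pv H p (H *\<^sub>v u) = H *\<^sub>v pv H p u"
proof (induction p arbitrary: u rule: pCons_induct)
  case 0
  then show ?case using H pv_0[of "H *\<^sub>v u" j H] pv_0[of u j H] by (auto intro!: eq_vecI)
next
  case (pCons a p)
  have Hu: "H *\<^sub>v u \<in> carrier_vec j" using H pCons by auto
  show ?case
    unfolding pv_pCons[OF H pCons.prems] pv_pCons[OF H Hu] pCons.IH[OF Hu]
    using pv_carrier[OF H Hu, of p] pCons.prems H
    by (simp add: mult_add_distrib_mat_vec mult_mat_vec)
qed

lemma pv_lin: assumes H: "H \<in> carrier_mat j j" and u: "u \<in> carrier_vec j"
  shows "pv H ([:-z, 1:] * q) u = (-z) \<cdot>\<^sub>v pv H q u + H *\<^sub>v pv H q u"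
proof -
  have e: "[:-z, 1:] * q = smult (-z) q + pCons 0 q" by (simp add: mult_pCons_left)
  have Hu: "H *\<^sub>v u \<in> carrier_vec j" using H u by auto
  show ?thesis unfolding e pv_add[OF H u] pv_smult[OF H u] pv_pCons[OF H u] pv_comm[OF H u]
    using pv_carrier[OF H u, of q] H u
    by (intro eq_vecI) auto
qed

lemma pv_factor:
  assumes H: "H \<in> carrier_mat j j" and u: "u \<in> carrier_vec j" and u0: "u \<noteq> 0\<^sub>v j"
  shows "p \<noteq> 0 \<Longrightarrow> pv H p u = 0\<^sub>v j \<Longrightarrow>
    \<exists>q \<mu>. degree q < degree p \<and> pv H q u \<noteq> 0\<^sub>v j \<and> H *\<^sub>v pv H q u = \<mu> \<cdot>\<^sub>v pv H q u"
proof (induction "degree p" arbitrary: p rule: less_induct)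
  case less
  show ?case
  proof (cases "degree p = 0")
    case True
    then have pe: "p = [:coeff p 0:]" by (metis degree_0_id)
    with less(2) have c0: "coeff p 0 \<noteq> 0" by auto
    have "pv H p u = coeff p 0 \<cdot>\<^sub>v u"
      using pv_pCons[OF H u, of "coeff p 0" 0] pe pv_0[of "H *\<^sub>v u" j H] H u
      by (auto intro!: eq_vecI)
    with less(3) have "coeff p 0 \<cdot>\<^sub>v u = 0\<^sub>v j" by simp
    then have "u = 0\<^sub>v j" using c0 u
      by (intro eq_vecI) (auto simp: vec_eq_iff)
    with u0 show ?thesis by simp
  next
    case False
    then have "\<not> constant (poly p)" by (simp add: constant_degree)
    then obtain z where "poly p z = 0" using fundamental_theorem_of_algebra by blast
    then have "[:-z, 1:] dvd p" by (simp add: poly_eq_0_iff_dvd)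
    then obtain q where pq: "p = [:-z, 1:] * q" by (elim dvdE)
    with less(2) have q0: "q \<noteq> 0" by auto
    have "degree ([:-z, 1:] * q) = degree [:-z, 1:] + degree q" using q0 by (intro degree_mult_eq) auto
    then have dq: "degree p = Suc (degree q)" using pq by simp
    define w where "w = pv H q u"
    have w: "w \<in> carrier_vec j" unfolding w_def by (rule pv_carrier[OF H u])
    have "(-z) \<cdot>\<^sub>v w + H *\<^sub>v w = 0\<^sub>v j" using less(3) pv_lin[OF H u, of z q] pq w_def by simp
    then have Hw: "H *\<^sub>v w = z \<cdot>\<^sub>v w"
    proof (intro eq_vecI)
      assume eq: "(-z) \<cdot>\<^sub>v w + H *\<^sub>v w = 0\<^sub>v j"
      fix i assume "i < dim_vec (z \<cdot>\<^sub>v w)"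
      then have i: "i < j" using w by simp
      have "((-z) \<cdot>\<^sub>v w + H *\<^sub>v w) $ i = 0" using eq i by simp
      then have "(-z) * w $ i + (H *\<^sub>v w) $ i = 0" using i w H by simp
      then show "(H *\<^sub>v w) $ i = (z \<cdot>\<^sub>v w) $ i" using i w H
        by (simp add: add_eq_0_iff2 mult.commute)
    qed (use w H in auto)
    show ?thesis
    proof (cases "w = 0\<^sub>v j")
      case False
      then show ?thesis using Hw dq unfolding w_def by (intro exI[of _ q] exI[of _ z]) auto
    next
      case True
      from less(1)[of q] dq q0 True obtain q' \<mu> where
        "degree q' < degree q" "pv H q' u \<noteq> 0\<^sub>v j" "H *\<^sub>v pv H q' u = \<mu> \<cdot>\<^sub>v pv H q' u"
        unfolding w_def by auto
      then show ?thesis using dq by (intro exI[of _ q'] exI[of _ \<mu>]) auto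
    qed
  qed
qed


lemma pv_index: assumes H: "H \<in> carrier_mat j j"
  shows "u \<in> carrier_vec j \<Longrightarrow> i < j \<Longrightarrow> (\<forall>k\<ge>N. coeff p k = 0) \<Longrightarrow>
    pv H p u $ i = (\<Sum>k<N. coeff p k * (H ^\<^sub>m k *\<^sub>v u) $ i)"
proof (induction p arbitrary: u N rule: pCons_induct)
  case 0
  then show ?case by (simp add: pv_0)
next
  case (pCons a p)
  have Hu: "H *\<^sub>v u \<in> carrier_vec j" using H pCons.prems by auto
  show ?case
  proof (cases N)
    case 0
    with pCons.prems have "coeff (pCons a p) k = 0" for k by auto
    then have "pCons a p = 0" by (intro poly_eqI) simp
    with pCons.hyps show ?thesis by simp
  next
    case (Suc N')
    have c: "\<forall>k\<ge>N'. coeff p k = 0"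
    proof (intro allI impI)
      fix k assume "N' \<le> k"
      then have "coeff (pCons a p) (Suc k) = 0" using pCons.prems Suc by auto
      then show "coeff p k = 0" by simp
    qed
    have pw: "\<And>k. H ^\<^sub>m Suc k *\<^sub>v u = H ^\<^sub>m k *\<^sub>v (H *\<^sub>v u)"
      using H pCons.prems by (simp add: assoc_mult_mat_vec[of _ j j _ j])
    have "pv H (pCons a p) u $ i = a * u $ i + pv H p (H *\<^sub>v u) $ i"
      unfolding pv_pCons[OF H pCons.prems(1)] using pv_carrier[OF H Hu, of p] pCons.prems by simp
    also have "\<dots> = a * u $ i + (\<Sum>k<N'. coeff p k * (H ^\<^sub>m k *\<^sub>v (H *\<^sub>v u)) $ i)"
      using pCons.IH[OF Hu pCons.prems(2) c] by simp
    also have "\<dots> = (\<Sum>k<N. coeff (pCons a p) k * (H ^\<^sub>m k *\<^sub>v u) $ i)"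
      unfolding Suc sum.lessThan_Suc_shift using pw H pCons.prems by simp
    finally show ?thesis .
  qed
qed

lemma pv_annih: assumes H: "H \<in> carrier_mat j j" and u: "u \<in> carrier_vec j"
  shows "\<exists>p. p \<noteq> 0 \<and> degree p \<le> j \<and> pv H p u = 0\<^sub>v j"
proof -
  define K where "K = mat\<^sub>r (Suc j) (Suc j) (\<lambda>i. if i = j then 0\<^sub>v (Suc j) else vec (Suc j) (\<lambda>k. (H ^\<^sub>m k *\<^sub>v u) $ i))"
  have K: "K \<in> carrier_mat (Suc j) (Suc j)" unfolding K_def by auto
  have "det K = 0" unfolding K_def by (rule det_row_0) auto
  then obtain c where c: "c \<in> carrier_vec (Suc j)" "c \<noteq> 0\<^sub>v (Suc j)" "K *\<^sub>v c = 0\<^sub>v (Suc j)"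
    using det_0_iff_vec_prod_zero_field[OF K] by blast
  define p where "p = (\<Sum>k<Suc j. monom (c $ k) k)"
  have cp: "coeff p k = (if k < Suc j then c $ k else 0)" for k
    unfolding p_def coeff_sum coeff_monom by (auto simp: sum.delta' if_distrib cong: if_cong)
  have "\<exists>k < Suc j. c $ k \<noteq> 0"
  proof (rule ccontr)
    assume "\<not> ?thesis"
    then have "c = 0\<^sub>v (Suc j)" using c(1) by (intro eq_vecI) auto
    with c(2) show False by simp
  qed
  then have p0: "p \<noteq> 0" using cp by (metis coeff_0)
  have dp: "degree p \<le> j" using cp by (intro degree_le) auto
  have "pv H p u = 0\<^sub>v j"
  proof (intro eq_vecI)
    fix i assume "i < dim_vec (0\<^sub>v j :: complex vec)"
    then have i: "i < j" by simp
    have "pv H p u $ i = (\<Sum>k<Suc j. coeff p k * (H ^\<^sub>m k *\<^sub>v u) $ i)"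
      by (rule pv_index[OF H u i]) (simp add: cp)
    also have "\<dots> = (\<Sum>k<Suc j. (H ^\<^sub>m k *\<^sub>v u) $ i * c $ k)"
      by (intro sum.cong) (auto simp: cp)
    also have "\<dots> = (K *\<^sub>v c) $ i"
      using i c(1) unfolding K_def by (simp add: scalar_prod_def atLeast0LessThan)
    also have "\<dots> = 0" using c(3) i by simp
    finally show "pv H p u $ i = 0\<^sub>v j $ i" using i by simp
  qed (use pv_carrier[OF H u] in auto)
  with p0 dp show ?thesis by blast
qed

lemma h_pv: assumes H: "H \<in> carrier_mat j j" and h: "h \<in> carrier_mat 1 j"
  shows "u \<in> carrier_vec j \<Longrightarrow> (\<forall>k<N. h *\<^sub>v (H ^\<^sub>m k *\<^sub>v u) = 0\<^sub>v 1) \<Longrightarrow> degree p < N \<Longrightarrow>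
    h *\<^sub>v pv H p u = 0\<^sub>v 1"
proof (induction p arbitrary: u N rule: pCons_induct)
  case 0
  then show ?case using h by (auto simp: pv_0 scalar_prod_def intro!: eq_vecI)
next
  case (pCons a p)
  have Hu: "H *\<^sub>v u \<in> carrier_vec j" using H pCons.prems by auto
  obtain N' where N: "N = Suc N'" using pCons.prems(3) by (cases N) auto
  have hu: "h *\<^sub>v u = 0\<^sub>v 1" using pCons.prems(2)[rule_format, of 0] N H pCons.prems(1) by simp
  have hp: "h *\<^sub>v pv H p (H *\<^sub>v u) = 0\<^sub>v 1"
  proof (cases "p = 0")
    case True
    then show ?thesis using h Hu by (auto simp: pv_0 scalar_prod_def intro!: eq_vecI)
  next
    case False
    then have "degree p < N'" using pCons.prems(3) N by simp
    moreover have "\<forall>k<N'. h *\<^sub>v (H ^\<^sub>m k *\<^sub>v (H *\<^sub>v u)) = 0\<^sub>v 1"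
    proof (intro allI impI)
      fix k assume "k < N'"
      then have "h *\<^sub>v (H ^\<^sub>m Suc k *\<^sub>v u) = 0\<^sub>v 1" using pCons.prems(2) N by auto
      then show "h *\<^sub>v (H ^\<^sub>m k *\<^sub>v (H *\<^sub>v u)) = 0\<^sub>v 1"
        using H pCons.prems(1) by (simp add: assoc_mult_mat_vec[of _ j j _ j])
    qed
    ultimately show ?thesis using pCons.IH[OF Hu] by blast
  qed
  show ?case
    unfolding pv_pCons[OF H pCons.prems(1)]
    using hu hp h pv_carrier[OF H Hu, of p] pCons.prems(1)
    by (simp add: mult_add_distrib_mat_vec mult_mat_vec) (auto intro!: eq_vecI)
qed

lemma obs_kernel:
  fixes H h :: "complex mat"
  assumes H: "H \<in> carrier_mat j j" and h: "h \<in> carrier_mat 1 j"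
    and obs: "\<not> (\<exists>u \<mu>. u \<in> carrier_vec j \<and> u \<noteq> 0\<^sub>v j \<and> h *\<^sub>v u = 0\<^sub>v 1 \<and> H *\<^sub>v u = \<mu> \<cdot>\<^sub>v u)"
    and u: "u \<in> carrier_vec j" and hk: "\<forall>k<j. h *\<^sub>v (H ^\<^sub>m k *\<^sub>v u) = 0\<^sub>v 1"
  shows "u = 0\<^sub>v j"
proof (rule ccontr)
  assume u0: "u \<noteq> 0\<^sub>v j"
  obtain p where p: "p \<noteq> 0" "degree p \<le> j" "pv H p u = 0\<^sub>v j" using pv_annih[OF H u] by blast
  obtain q \<mu> where q: "degree q < degree p" "pv H q u \<noteq> 0\<^sub>v j" "H *\<^sub>v pv H q u = \<mu> \<cdot>\<^sub>v pv H q u"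
    using pv_factor[OF H u u0 p(1) p(3)] by blast
  have "h *\<^sub>v pv H q u = 0\<^sub>v 1" using h_pv[OF H h u hk] q(1) p(2) by simp
  with q pv_carrier[OF H u, of q] obs show False by blast
qed


lemma mat_adjoint_carrier: "A \<in> carrier_mat a b \<Longrightarrow> mat_adjoint A \<in> carrier_mat b a"
  unfolding mat_adjoint_def by auto

lemma mat_adjoint_index: "i < dim_col A \<Longrightarrow> k < dim_row A \<Longrightarrow> mat_adjoint A $$ (i,k) = conjugate (A $$ (k,i))"
  unfolding mat_adjoint_def by (simp add: mat_of_rows_def)

lemma (in vec_space) rank_le_nr:
  assumes "A \<in> carrier_mat n nc"
  shows "rank A \<le> n"
proof -
  obtain S where S: "maximal S (\<lambda>T. T \<subseteq> set (cols A) \<and> lin_indpt T)"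
    using maximal_exists[of "(\<lambda>T. T \<subseteq> set (cols A) \<and> lin_indpt T)" "card (set (cols A))" "{}"]
    by (meson List.finite_set card_mono empty_iff empty_subsetI finite_lin_indpt2 rev_finite_subset)
  then have r: "rank A = card S" using rank_card_indpt[OF assms] by blast
  from S have "S \<subseteq> set (cols A)" "lin_indpt S" unfolding maximal_def by auto
  moreover have "set (cols A) \<subseteq> carrier_vec n" using assms cols_dim by blast
  ultimately have "card S \<le> dim" using li_le_dim(2)[OF fin_dim] by auto
  then show ?thesis using r dim_is_n by simp
qed

lemma adj_pow:
  fixes H :: "complex mat"
  assumes H: "H \<in> carrier_mat j j"
  shows "r \<in> carrier_mat 1 j \<Longrightarrow>
    mat_adjoint H ^\<^sub>m k *\<^sub>v vec j (\<lambda>i. cnj (r $$ (0,i))) = vec j (\<lambda>i. cnj ((r * H ^\<^sub>m k) $$ (0,i)))"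
proof (induction k arbitrary: r)
  case 0
  have F: "mat_adjoint H \<in> carrier_mat j j" using mat_adjoint_carrier[OF H] .
  show ?case using 0 F H by auto
next
  case (Suc k)
  have F: "mat_adjoint H \<in> carrier_mat j j" using mat_adjoint_carrier[OF H] .
  have rH: "r * H \<in> carrier_mat 1 j" using Suc.prems H by auto
  have step: "mat_adjoint H *\<^sub>v vec j (\<lambda>i. cnj (r $$ (0,i))) = vec j (\<lambda>i. cnj ((r * H) $$ (0,i)))"
  proof (intro eq_vecI)
    fix i assume "i < dim_vec (vec j (\<lambda>i. cnj ((r * H) $$ (0,i))))"
    then have i: "i < j" by simp
    have "(mat_adjoint H *\<^sub>v vec j (\<lambda>i. cnj (r $$ (0,i)))) $ i
        = (\<Sum>l<j. cnj (H $$ (l,i)) * cnj (r $$ (0,l)))"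
      using i F H by (simp add: scalar_prod_def mat_adjoint_index atLeast0LessThan)
    also have "\<dots> = cnj ((r * H) $$ (0,i))"
      using i H Suc.prems by (simp add: scalar_prod_def atLeast0LessThan mult.commute)
    finally show "(mat_adjoint H *\<^sub>v vec j (\<lambda>i. cnj (r $$ (0,i)))) $ i = vec j (\<lambda>i. cnj ((r * H) $$ (0,i))) $ i"
      using i by simp
  qed (use F in simp)
  have "mat_adjoint H ^\<^sub>m Suc k *\<^sub>v vec j (\<lambda>i. cnj (r $$ (0,i)))
     = mat_adjoint H ^\<^sub>m k *\<^sub>v (mat_adjoint H *\<^sub>v vec j (\<lambda>i. cnj (r $$ (0,i))))"
    using F by (simp add: assoc_mult_mat_vec[of _ j j _ j])
  also have "\<dots> = vec j (\<lambda>i. cnj ((r * H * H ^\<^sub>m k) $$ (0,i)))"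
    unfolding step Suc.IH[OF rH] ..
  also have "r * H * H ^\<^sub>m k = r * H ^\<^sub>m Suc k"
    using Suc.prems H pow_mat_commute[OF H, of k] by (simp add: assoc_mult_mat[of _ 1 j _ j _ j])
  finally show ?case .
qed


lemma ctrb_full:
  fixes H h X :: "complex mat"
  assumes H: "H \<in> carrier_mat j j" and h: "h \<in> carrier_mat 1 j" and X: "X \<in> carrier_mat j m"
    and obs: "\<not> (\<exists>u \<mu>. u \<in> carrier_vec j \<and> u \<noteq> 0\<^sub>v j \<and> h *\<^sub>v u = 0\<^sub>v 1 \<and> H *\<^sub>v u = \<mu> \<cdot>\<^sub>v u)"
  shows "controllable (mat_adjoint H) (hcat (mat_adjoint h) X)"
proof -
  define F where "F = mat_adjoint H"
  define G where "G = hcat (mat_adjoint h) X"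
  have F: "F \<in> carrier_mat j j" unfolding F_def by (rule mat_adjoint_carrier[OF H])
  have ha: "mat_adjoint h \<in> carrier_mat j 1" by (rule mat_adjoint_carrier[OF h])
  have G: "G \<in> carrier_mat j (Suc m)" unfolding G_def hcat_def using ha X by auto
  have Gcol: "col G 0 = vec j (\<lambda>i. cnj (h $$ (0,i)))"
    using G ha h unfolding G_def hcat_def by (auto intro!: eq_vecI simp: mat_adjoint_index)
  define K where "K = ctrb_mat F G"
  have K: "K \<in> carrier_mat j (j * Suc m)" unfolding K_def ctrb_mat_def using F G by auto
  have Kcol: "col K (k * Suc m) = vec j (\<lambda>i. cnj ((h * H ^\<^sub>m k) $$ (0,i)))" if k: "k < j" for k
  proof (intro eq_vecI)
    fix i assume "i < dim_vec (vec j (\<lambda>i. cnj ((h * H ^\<^sub>m k) $$ (0,i))))"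
    then have i: "i < j" by simp
    have kj: "k * Suc m < j * Suc m" using mult_less_mono1[OF k, of "Suc m"] by blast
    have e: "k + k * m = Suc m * k" by simp
    have dm: "(k + k * m) div Suc m = k" "(k + k * m) mod Suc m = 0"
      unfolding e by (metis nonzero_mult_div_cancel_left nat.distinct(1), metis mod_mult_self1_is_0)
    have "col K (k * Suc m) $ i = (F ^\<^sub>m k * G) $$ (i, 0)"
      using i kj F G dm unfolding K_def ctrb_mat_def by simp
    also have "\<dots> = (F ^\<^sub>m k *\<^sub>v col G 0) $ i" using i F G by simp
    also have "\<dots> = cnj ((h * H ^\<^sub>m k) $$ (0,i))"
      unfolding Gcol F_def adj_pow[OF H h] using i by simp
    finally show "col K (k * Suc m) $ i = vec j (\<lambda>i. cnj ((h * H ^\<^sub>m k) $$ (0,i))) $ i"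
      using i by simp
  qed (use K in simp)
  define Ob where "Ob = mat j j (\<lambda>(k,i). (h * H ^\<^sub>m k) $$ (0,i))"
  define Q where "Q = mat j j (\<lambda>(i,k). cnj (Ob $$ (k,i)))"
  have Ob: "Ob \<in> carrier_mat j j" and Q: "Q \<in> carrier_mat j j" unfolding Ob_def Q_def by auto
  have Qcol: "col Q k = col K (k * Suc m)" if k: "k < j" for k
    unfolding Kcol[OF k] using k by (auto simp: Q_def Ob_def intro!: eq_vecI)
  have sub: "set (cols Q) \<subseteq> set (cols K)"
  proof
    fix x assume "x \<in> set (cols Q)"
    then obtain k where k: "k < j" and x: "x = col Q k" using Q by (auto simp: cols_def)
    have "k * Suc m < j * Suc m" using mult_less_mono1[OF k, of "Suc m"] by blast
    then show "x \<in> set (cols K)" unfolding x Qcol[OF k] using K by (auto simp: cols_def)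
  qed
  have rle: "vec_space.rank j K \<le> j" by (rule vec_space.rank_le_nr[OF K])
  have "vec_space.rank j K = j"
  proof (cases "det Q = 0")
    case False
    have rQ: "vec_space.rank j Q = j" using vec_space.det_rank_iff[OF Q] False by simp
    have dist: "distinct (cols Q)"
    proof (rule ccontr)
      assume "\<not> distinct (cols Q)"
      then obtain a b where "a \<noteq> b" "cols Q ! a = cols Q ! b" "a < length (cols Q)" "b < length (cols Q)"
        using distinct_conv_nth by blast
      then have "det Q = 0" using det_identical_cols[OF Q, of a b] Q by simp
      with False show False by simp
    qed
    have li: "module.lin_indpt class_ring (module_vec TYPE(complex) j) (set (cols Q))"
      using vec_space.full_rank_lin_indpt[OF Q rQ dist] .
    have "card (set (cols Q)) \<le> vec_space.rank j K"
      by (rule vec_space.rank_ge_card_indpt[OF K sub li])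
    moreover have "card (set (cols Q)) = j" using dist Q by (simp add: distinct_card)
    ultimately show ?thesis using rle by simp
  next
    case True
    then obtain v where v: "v \<in> carrier_vec j" "v \<noteq> 0\<^sub>v j" "Q *\<^sub>v v = 0\<^sub>v j"
      using det_0_iff_vec_prod_zero_field[OF Q] by blast
    define v' where "v' = vec j (\<lambda>k. cnj (v $ k))"
    have v': "v' \<in> carrier_vec j" unfolding v'_def by simp
    have v'0: "v' \<noteq> 0\<^sub>v j"
    proof
      assume "v' = 0\<^sub>v j"
      then have "v = 0\<^sub>v j" using v(1) unfolding v'_def
        by (intro eq_vecI) (auto simp: vec_eq_iff)
      with v(2) show False by simp
    qed
    have "transpose_mat Ob *\<^sub>v v' = 0\<^sub>v j"
    proof (intro eq_vecI)
      fix i assume "i < dim_vec (0\<^sub>v j :: complex vec)"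
      then have i: "i < j" by simp
      have "(Q *\<^sub>v v) $ i = 0" using v(3) i by simp
      then have "(\<Sum>k<j. cnj (Ob $$ (k,i)) * v $ k) = 0"
        using i v(1) by (simp add: Q_def scalar_prod_def atLeast0LessThan)
      then have "cnj (\<Sum>k<j. cnj (Ob $$ (k,i)) * v $ k) = 0" by simp
      then have "(\<Sum>k<j. Ob $$ (k,i) * cnj (v $ k)) = 0" by simp
      then show "(transpose_mat Ob *\<^sub>v v') $ i = 0\<^sub>v j $ i"
        using i Ob unfolding v'_def by (simp add: scalar_prod_def atLeast0LessThan)
    qed (use Ob in simp)
    then have "det (transpose_mat Ob) = 0"
      using det_0_iff_vec_prod_zero_field[of "transpose_mat Ob" j] Ob v' v'0 by auto
    then have "det Ob = 0" using det_transpose[OF Ob] by simp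
    then obtain u where u: "u \<in> carrier_vec j" "u \<noteq> 0\<^sub>v j" "Ob *\<^sub>v u = 0\<^sub>v j"
      using det_0_iff_vec_prod_zero_field[OF Ob] by blast
    have "\<forall>k<j. h *\<^sub>v (H ^\<^sub>m k *\<^sub>v u) = 0\<^sub>v 1"
    proof (intro allI impI)
      fix k assume k: "k < j"
      have hk: "h * H ^\<^sub>m k \<in> carrier_mat 1 j" using h H by auto
      have "(Ob *\<^sub>v u) $ k = 0" using u(3) k by simp
      then have s0: "(\<Sum>i = 0..<j. (h * H ^\<^sub>m k) $$ (0, i) * u $ i) = 0"
        using k u(1) hk by (simp add: Ob_def scalar_prod_def)
      have "row (h * H ^\<^sub>m k) 0 \<bullet> u = (\<Sum>i = 0..<j. (h * H ^\<^sub>m k) $$ (0, i) * u $ i)"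
        using u(1) carrier_matD[OF hk] unfolding scalar_prod_def by (intro sum.cong) auto
      then have "row (h * H ^\<^sub>m k) 0 \<bullet> u = 0" using s0 by simp
      then have "(h * H ^\<^sub>m k) *\<^sub>v u = 0\<^sub>v 1" using hk by (auto intro!: eq_vecI)
      then show "h *\<^sub>v (H ^\<^sub>m k *\<^sub>v u) = 0\<^sub>v 1"
        using h H u(1) by (simp add: assoc_mult_mat_vec[of _ 1 j _ j])
    qed
    then have "u = 0\<^sub>v j" using obs_kernel[OF H h obs u(1)] by blast
    with u(2) show ?thesis by simp
  qed
  then show ?thesis unfolding controllable_def F_def[symmetric] G_def[symmetric] K_def[symmetric]
    using F by simp
qed


theorem mainTheorem3:
  fixes A C Z h H :: "complex mat" and s :: "complex multiset" and n j :: nat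
  assumes A: "A \<in> carrier_mat n n"
    and C: "C \<in> carrier_mat 1 n"
    and s_size: "size s = j"
    and s_spec: "\<forall>x \<in># s. \<not> eigenvalue (mat_adjoint A) x"
    and K_variant: "variant (mat_adjoint A) (rat_krylov (mat_adjoint A) (col (mat_adjoint C) 0) s)"
    and Z: "Z \<in> carrier_mat n j"
    and Z_span: "{Z *\<^sub>v y | y. y \<in> carrier_vec j} = rat_krylov (mat_adjoint A) (col (mat_adjoint C) 0) s"
    and Z_indep: "\<forall>y \<in> carrier_vec j. Z *\<^sub>v y = 0\<^sub>v n \<longrightarrow> y = 0\<^sub>v j"
    and h: "h \<in> carrier_mat 1 j"
    and H: "H \<in> carrier_mat j j"
    and rel: "mat_adjoint A * Z = mat_adjoint C * h + Z * H"
    and spec_H: "char_poly H = nodal_poly s"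
  shows "(\<not> (\<exists>u \<mu>. u \<in> carrier_vec j \<and> u \<noteq> 0\<^sub>v j \<and> h *\<^sub>v u = 0\<^sub>v 1 \<and> H *\<^sub>v u = \<mu> \<cdot>\<^sub>v u))
       \<and> (\<forall>m B. B \<in> carrier_mat n m \<longrightarrow>
            controllable (mat_adjoint H) (hcat (mat_adjoint h) (mat_adjoint Z * B)))"
proof -
  have obs: "\<not> (\<exists>u \<mu>. u \<in> carrier_vec j \<and> u \<noteq> 0\<^sub>v j \<and> h *\<^sub>v u = 0\<^sub>v 1 \<and> H *\<^sub>v u = \<mu> \<cdot>\<^sub>v u)"
  proof
    assume "\<exists>u \<mu>. u \<in> carrier_vec j \<and> u \<noteq> 0\<^sub>v j \<and> h *\<^sub>v u = 0\<^sub>v 1 \<and> H *\<^sub>v u = \<mu> \<cdot>\<^sub>v u"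
    then obtain u \<mu> where u: "u \<in> carrier_vec j" "u \<noteq> 0\<^sub>v j" "h *\<^sub>v u = 0\<^sub>v 1" "H *\<^sub>v u = \<mu> \<cdot>\<^sub>v u"
      by blast
    have "eigenvalue H \<mu>" unfolding eigenvalue_def eigenvector_def using u H by auto
    then have "poly (nodal_poly s) \<mu> = 0" using eigenvalue_root_char_poly[OF H] spec_H by simp
    then have "(\<Prod>x\<in>#s. poly [:-x, 1:] \<mu>) = 0" unfolding nodal_poly_def poly_prod_mset .
    then obtain x where x: "x \<in># s" "poly [:-x, 1:] \<mu> = 0" by (auto simp: prod_mset_zero_iff)
    then have mx: "\<mu> = x" by simp
    define M where "M = mat_adjoint A"
    have M: "M \<in> carrier_mat n n" unfolding M_def by (rule mat_adjoint_carrier[OF A])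
    have Cs: "mat_adjoint C \<in> carrier_mat n 1" by (rule mat_adjoint_carrier[OF C])
    define v where "v = Z *\<^sub>v u"
    have v: "v \<in> carrier_vec n" using Z u unfolding v_def by auto
    have v0: "v \<noteq> 0\<^sub>v n" using Z_indep u unfolding v_def by blast
    have "M *\<^sub>v v = (M * Z) *\<^sub>v u" unfolding v_def using M Z u by (simp add: assoc_mult_mat_vec[of _ n n _ j])
    also have "\<dots> = (mat_adjoint C * h) *\<^sub>v u + (Z * H) *\<^sub>v u"
      unfolding M_def rel using Cs h Z H u by (intro add_mult_distrib_mat_vec) auto
    also have "\<dots> = mat_adjoint C *\<^sub>v (h *\<^sub>v u) + Z *\<^sub>v (H *\<^sub>v u)"
      using Cs h Z H u by (simp add: assoc_mult_mat_vec[of _ n 1 _ j] assoc_mult_mat_vec[of _ n j _ j])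
    also have "\<dots> = \<mu> \<cdot>\<^sub>v v"
      unfolding u(3) u(4) v_def using Cs Z u by (auto simp: mult_mat_vec intro!: eq_vecI)
    finally have "eigenvalue M \<mu>" unfolding eigenvalue_def eigenvector_def using v v0 M by auto
    with s_spec x mx show False unfolding M_def by blast
  qed
  moreover have "\<forall>m B. B \<in> carrier_mat n m \<longrightarrow>
            controllable (mat_adjoint H) (hcat (mat_adjoint h) (mat_adjoint Z * B))"
  proof (intro allI impI)
    fix m and B :: "complex mat" assume B: "B \<in> carrier_mat n m"
    have "mat_adjoint Z * B \<in> carrier_mat j m" using mat_adjoint_carrier[OF Z] B by auto
    then show "controllable (mat_adjoint H) (hcat (mat_adjoint h) (mat_adjoint Z * B))"
      by (rule ctrb_full[OF H h _ obs])
  qed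
  ultimately show ?thesis by blast
qed

end
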